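(* Let $\alpha,\beta\in[0,1)$ and $\mathcal E(\alpha,\beta)=\{x\in\mathbb R:\mathcal D(\beta,x)=0\text{ or }\Psi(\alpha,\beta,x)=0\}$. Then $\mathcal E(\alpha,\beta)$ consists exactly of the three zeros of $\mathcal D(\beta,\cdot)$ together with: the value $\frac32$ if $\alpha=0$; the value $\frac12$ if $\alpha=\frac12$; and the value $1+\frac12\cos(2\pi\alpha)$ if $3\alpha+\beta\equiv\frac12\pmod 1$.
   Context: $\mathcal D(\beta,\lambda)=-\lambda^3+3\lambda^2-\frac{45}{16}\lambda+\frac{13}{16}-\frac1{32}\cos2\pi\beta$; $\Psi(\alpha,\beta,\lambda)=(1-\lambda)^2-\frac1{16}+\frac{1-\lambda}{4}(2e^{-2\pi i\alpha}+e^{-2\pi i(2\alpha+\beta)})+\frac1{16}(e^{-4\pi i\alpha}+2e^{-2\pi i(\alpha+\beta)})$. *)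

theory Defs
  imports Complex_Main
begin

definition D :: "real \<Rightarrow> real \<Rightarrow> real" where
  "D \<beta> lam = - (lam^3) + 3 * lam^2 - 45/16 * lam + 13/16 - 1/32 * cos (2 * pi * \<beta>)"

definition Psi :: "real \<Rightarrow> real \<Rightarrow> complex \<Rightarrow> complex" where
  "Psi \<alpha> \<beta> lam = (1 - lam)^2 - 1/16
     + (1 - lam) / 4 * (2 * exp (- 2 * pi * \<i> * \<alpha>) + exp (- 2 * pi * \<i> * (2 * \<alpha> + \<beta>)))
     + 1/16 * (exp (- 4 * pi * \<i> * \<alpha>) + 2 * exp (- 2 * pi * \<i> * (\<alpha> + \<beta>)))"

definition E :: "real \<Rightarrow> real \<Rightarrow> real set" where
  "E \<alpha> \<beta> = {x. D \<beta> x = 0 \<or> Psi \<alpha> \<beta> (complex_of_real x) = 0}"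

end

theory Submission
  imports Defs "HOL-Analysis.Analysis"
begin

lemma key:
  fixes x r v w u :: complex
  assumes "u * r = 1" "v * w = 1"
   and "x^2 - 1 + x * (2 * u + u^2 * v) + u^2 + 2 * u * v = 0"
   and "x^2 - 1 + x * (2 * r + r^2 * w) + r^2 + 2 * r * w = 0"
  shows "(x^3 - 3 * x - v - w) * (2 * r + x) = 0"
  using assms by algebra

lemma psi_zero:
  assumes "Psi \<alpha> \<beta> (complex_of_real lam) = 0"
  shows "D \<beta> lam = 0 \<or> (cos (2 * pi * \<alpha>) = 1 \<and> lam = 3/2) \<or> (cos (2 * pi * \<alpha>) = -1 \<and> lam = 1/2)"
proof -
  define u where "u = exp (- 2 * pi * \<i> * \<alpha>)"
  define r where "r = exp (2 * pi * \<i> * \<alpha>)"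
  define v where "v = exp (- 2 * pi * \<i> * \<beta>)"
  define w where "w = exp (2 * pi * \<i> * \<beta>)"
  define x where "x = 4 * (1 - complex_of_real lam)"
  have ur: "u * r = 1" unfolding u_def r_def by (simp add: exp_add[symmetric])
  have vv: "v * w = 1" unfolding v_def w_def by (simp add: exp_add[symmetric])
  have e1: "exp (- 2 * pi * \<i> * (2 * complex_of_real \<alpha> + complex_of_real \<beta>)) = u^2 * v"
    unfolding u_def v_def power2_eq_square by (simp add: exp_add[symmetric] algebra_simps)
  have e2: "exp (- 4 * pi * \<i> * \<alpha>) = u^2"
    unfolding u_def v_def power2_eq_square by (simp add: exp_add[symmetric] algebra_simps)
  have e3: "exp (- 2 * pi * \<i> * (complex_of_real \<alpha> + complex_of_real \<beta>)) = u * v"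
    unfolding u_def v_def by (simp add: exp_add[symmetric] algebra_simps)
  have P: "16 * Psi \<alpha> \<beta> (complex_of_real lam) = x^2 - 1 + x * (2 * u + u^2 * v) + u^2 + 2 * u * v"
    unfolding Psi_def e1 e2 e3 unfolding x_def[folded u_def] u_def[symmetric] by (simp add: field_simps power2_eq_square)
  have Q1: "x^2 - 1 + x * (2 * u + u^2 * v) + u^2 + 2 * u * v = 0" using P assms by simp
  have Q2: "x^2 - 1 + x * (2 * r + r^2 * w) + r^2 + 2 * r * w = 0"
  proof -
    have "cnj (x^2 - 1 + x * (2 * u + u^2 * v) + u^2 + 2 * u * v) = 0" using Q1 by simp
    moreover have "cnj u = r" "cnj v = w" "cnj x = x"
      unfolding u_def r_def v_def w_def x_def by (simp_all add: exp_cnj)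
    ultimately show ?thesis by simp
  qed
  have K: "(x^3 - 3 * x - v - w) * (2 * r + x) = 0" using key[OF ur vv Q1 Q2] .
  have vcis: "v = cis (-(2 * pi * \<beta>))" "w = cis (2 * pi * \<beta>)"
    unfolding v_def w_def by (simp_all add: cis_conv_exp algebra_simps)
  have vvc: "v + w = 2 * cos (2 * pi * \<beta>)" unfolding vcis by (simp add: complex_eq_iff)
  have Dx: "x^3 - 3 * x - v - w = complex_of_real (64 * D \<beta> lam)"
  proof -
    have "x^3 - 3 * x - v - w = x^3 - 3 * x - (v + w)" by simp
    also have "\<dots> = complex_of_real (64 * D \<beta> lam)" unfolding vvc x_def D_def
      by (simp add: algebra_simps power2_eq_square power3_eq_cube)
    finally show ?thesis .
  qed
  show ?thesis
  proof (cases "D \<beta> lam = 0")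
    case True then show ?thesis by simp
  next
    case False
    then have "2 * r + x = 0" using K Dx by simp
    then have rr: "r = - x / 2" by (simp add: field_simps add_eq_0_iff)
    have "Im r = 0" unfolding rr x_def by simp
    moreover have "r = cis (2 * pi * \<alpha>)" unfolding r_def by (simp add: cis_conv_exp algebra_simps)
    ultimately have s: "sin (2 * pi * \<alpha>) = 0" by simp
    have "Re r = 2 * lam - 2" unfolding rr x_def by simp
    then have c: "cos (2 * pi * \<alpha>) = 2 * lam - 2" using \<open>r = cis _\<close> by simp
    have "cos (2 * pi * \<alpha>) = 1 \<or> cos (2 * pi * \<alpha>) = -1"
      using s sin_cos_squared_add[of "2 * pi * \<alpha>"] by (simp add: power2_eq_square) (metis square_eq_1_iff)
    then show ?thesis using c by auto
  qed
qed

lemma third_case: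
  assumes "3 * \<alpha> + \<beta> - 1/2 \<in> \<int>"
  shows "D \<beta> (1 + 1/2 * cos (2 * pi * \<alpha>)) = 0"
proof -
  obtain k where k: "3 * \<alpha> + \<beta> - 1/2 = of_int k" using assms Ints_cases by metis
  have b: "2 * pi * \<beta> = 2 * pi * of_int k + (pi - 3 * (2 * pi * \<alpha>))"
    proof -
    have "\<beta> = of_int k + 1/2 - 3 * \<alpha>" using k by linarith
    then have "2 * pi * \<beta> = 2 * pi * (of_int k + 1/2 - 3 * \<alpha>)" by simp
    then show ?thesis by (simp add: algebra_simps)
  qed
  have "cos (2 * pi * \<beta>) = - cos (3 * (2 * pi * \<alpha>))"
    unfolding b by (simp add: cos_add)
  also have "\<dots> = - (4 * cos (2 * pi * \<alpha>) ^ 3 - 3 * cos (2 * pi * \<alpha>))" using cos_treble_cos[of "2 * pi * \<alpha>"] by simp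
  finally have h: "cos (2 * pi * \<beta>) = - (4 * cos (2 * pi * \<alpha>) ^ 3 - 3 * cos (2 * pi * \<alpha>))" .
  define c where "c = cos (2 * pi * \<alpha>)"
  show ?thesis unfolding D_def h c_def[symmetric] by (simp add: field_simps power2_eq_square power3_eq_cube)
qed

lemma psi_a0: "Psi 0 \<beta> (complex_of_real (3/2)) = 0"
  unfolding Psi_def by (simp add: field_simps power2_eq_square)

lemma psi_ahalf: "Psi (1/2) \<beta> (complex_of_real (1/2)) = 0"
proof -
  have "exp (- 2 * pi * \<i> * complex_of_real (1/2)) = -1"
    by (simp add: exp_eq_polar complex_eq_iff)
  moreover have "exp (- 4 * pi * \<i> * complex_of_real (1/2)) = 1"
    by (simp add: exp_eq_polar complex_eq_iff)
  moreover have "exp (- 2 * pi * \<i> * (2 * complex_of_real (1/2) + complex_of_real \<beta>)) = exp (- 2 * pi * \<i> * complex_of_real \<beta>)"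
    by (simp add: exp_eq_polar complex_eq_iff algebra_simps cos_diff sin_diff)
  moreover have "exp (- 2 * pi * \<i> * (complex_of_real (1/2) + complex_of_real \<beta>)) = - exp (- 2 * pi * \<i> * complex_of_real \<beta>)"
    by (simp add: exp_eq_polar complex_eq_iff algebra_simps cos_diff sin_diff)
  ultimately show ?thesis unfolding Psi_def by (simp add: field_simps power2_eq_square)
qed

theorem proposition4p4:
  fixes \<alpha> \<beta> :: real
  assumes "0 \<le> \<alpha>" "\<alpha> < 1" "0 \<le> \<beta>" "\<beta> < 1"
  shows "E \<alpha> \<beta> =
      {x. D \<beta> x = 0}
      \<union> (if \<alpha> = 0 then {3/2} else {})
      \<union> (if \<alpha> = 1/2 then {1/2} else {})
      \<union> (if 3 * \<alpha> + \<beta> - 1/2 \<in> \<int> then {1 + 1/2 * cos (2 * pi * \<alpha>)} else {})"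
proof -
  have c1: "\<alpha> = 0" if h1: "cos (2 * pi * \<alpha>) = 1"
  proof -
    obtain n :: int where "2 * pi * \<alpha> = of_int n * 2 * pi" using iffD1[OF cos_one_2pi_int h1] by blast
    then have "\<alpha> = n" by simp
    with assms have "0 \<le> n" "n < 1" by auto
    then have "n = 0" by simp
    with \<open>\<alpha> = n\<close> show ?thesis by simp
  qed
  have c2: "\<alpha> = 1/2" if h1: "cos (2 * pi * \<alpha>) = -1"
  proof -
    obtain n :: int where "2 * pi * \<alpha> = (2 * of_int n + 1) * pi" using iffD1[OF cos_eq_minus1 h1] by blast
    then have "2 * \<alpha> = 2 * n + 1" by simp
    with assms have "0 \<le> 2 * n + 1" "2 * n + 1 < 2" by linarith+
    then have "n = 0" by simp
    with \<open>2 * \<alpha> = 2 * n + 1\<close> show ?thesis by simp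
  qed
  show ?thesis
  proof (intro set_eqI iffI)
    fix x assume "x \<in> E \<alpha> \<beta>"
    then have "D \<beta> x = 0 \<or> Psi \<alpha> \<beta> (complex_of_real x) = 0" unfolding E_def by simp
    then show "x \<in> {x. D \<beta> x = 0}
      \<union> (if \<alpha> = 0 then {3/2} else {})
      \<union> (if \<alpha> = 1/2 then {1/2} else {})
      \<union> (if 3 * \<alpha> + \<beta> - 1/2 \<in> \<int> then {1 + 1/2 * cos (2 * pi * \<alpha>)} else {})"
      using psi_zero[of \<alpha> \<beta> x] c1 c2 by auto
  next
    fix x assume "x \<in> {x. D \<beta> x = 0}
      \<union> (if \<alpha> = 0 then {3/2} else {})
      \<union> (if \<alpha> = 1/2 then {1/2} else {})
      \<union> (if 3 * \<alpha> + \<beta> - 1/2 \<in> \<int> then {1 + 1/2 * cos (2 * pi * \<alpha>)} else {})"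
    then have "D \<beta> x = 0 \<or> (\<alpha> = 0 \<and> x = 3/2) \<or> (\<alpha> = 1/2 \<and> x = 1/2)
       \<or> (3 * \<alpha> + \<beta> - 1/2 \<in> \<int> \<and> x = 1 + 1/2 * cos (2 * pi * \<alpha>))"
      by (simp split: if_splits)
    then show "x \<in> E \<alpha> \<beta>" unfolding E_def
    proof (elim disjE conjE)
      assume "\<alpha> = 0" "x = 3/2" then show "x \<in> {x. D \<beta> x = 0 \<or> Psi \<alpha> \<beta> (complex_of_real x) = 0}"
        unfolding \<open>\<alpha> = 0\<close> \<open>x = 3/2\<close> using psi_a0[of \<beta>] by simp
    next
      assume "\<alpha> = 1/2" "x = 1/2" then show "x \<in> {x. D \<beta> x = 0 \<or> Psi \<alpha> \<beta> (complex_of_real x) = 0}"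
        unfolding \<open>\<alpha> = 1/2\<close> \<open>x = 1/2\<close> using psi_ahalf[of \<beta>] by simp
    next
      assume "3 * \<alpha> + \<beta> - 1/2 \<in> \<int>" "x = 1 + 1/2 * cos (2 * pi * \<alpha>)"
      then show "x \<in> {x. D \<beta> x = 0 \<or> Psi \<alpha> \<beta> (complex_of_real x) = 0}"
        using third_case[of \<alpha> \<beta>] by simp
    qed simp
  qed
qed

end
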